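(* There exists a constant $C \geq 1$ such that \[ \sum_{q=1}^Q \mathbf{1}_{R_q} \leq C K\Bigl(1 \vee \frac{\|x\|_\infty}{t}\Bigr). \]
   Context: Let $d \geq 2$. Let $\omega=(\omega(x))_{x \in \mathbb{Z}^d}$ be independent random variables with a common law on $\mathbb{N}_0$, not concentrated at $0$. Independently of $\omega$, let $(S_k(x,\ell))_{k \geq 0}$, $x \in \mathbb{Z}^d$, $\ell \in \mathbb{N}$, be independent simple random walks on $\mathbb{Z}^d$ with $S_0(x,\ell)=x$. For $x,y \in \mathbb{Z}^d$ let $\tau(x,y):=\inf\{k \geq 0: S_k(x,\ell)=y \text{ for some } 1 \leq \ell \leq \omega(x)\}$ ($:=\infty$ if $\omega(x)=0$). Let $C_0\in(0,\infty)$ be a constant for which there are $0<c,c'<\infty$, $0<a<1$ with $P(T(0,x)\ge s\mid\omega(0)\ge 1)\le c\,e^{-c's^{a}}$ for all $x\in\mathbb{Z}^d$ and $s\ge C_0\|x\|_1$, where $T(x,y):=\inf\{\sum_{i=0}^{m-1}\tau(x_i,x_{i+1}): m \geq 1,\ x=x_0,\dots,x_m=y\}$. Fix $\gamma>0$ and a constant $K>d(C_0+\gamma+1)$. For $t>0$ define $\sigma_t(x,y)$ by: $\sigma_t(x,y):=4Kt$ if $\|x-y\|_\infty\le t$ and $\tau(x,y)>4Kt$; $\sigma_t(x,y):=4K\|x-y\|_\infty$ if $\|x-y\|_\infty>t$; $\sigma_t(x,y):=\tau(x,y)$ otherwise; and $T_t(x,y):=\inf\{\sum_{i=0}^{m-1}\sigma_t(x_i,x_{i+1}):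 m\ge 1,\ x=x_0,\dots,x_m=y\}$. Fix $x\in\mathbb{Z}^d\setminus\{0\}$ and $t>0$. Tile $\mathbb{Z}^d$ with copies $\Lambda_q$, $q\in\mathbb{N}$, of $(-t/2,t/2]^d$, each centered at a point of $\mathbb{Z}^d$, so that each site lies in exactly one box, numbered so that $T_t(0,x)$ depends only on the configuration ($\omega$ and the walks started) in $\Lambda_1,\dots,\Lambda_Q$ for some finite $Q$. Let $\pi_t(0,x)=(0=x_0,x_1,\dots,x_m=x)$ be a sequence with $T_t(0,x)=\sum_{i=0}^{m-1}\sigma_t(x_i,x_{i+1})$, chosen by a deterministic tie-breaking rule, and let $R_q$ be the event that $\pi_t(0,x)$ intersects $\Lambda_q$. The constant $C$ does not depend on $x$, $t$ or the configuration. *)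

theory Defs
  imports "HOL-Analysis.Analysis"
begin

text \<open>Sites of Z^d are vectors of type int^'d (dimension d = CARD('d)).\<close>

definition norm_inf :: "int ^ 'd \<Rightarrow> real" where
  "norm_inf v = real_of_int (Max (range (\<lambda>i. \<bar>v $ i\<bar>)))"

definition norm1 :: "int ^ 'd \<Rightarrow> int" where
  "norm1 v = (\<Sum>i\<in>UNIV. \<bar>v $ i\<bar>)"

text \<open>A realisation of the walks: S x l is the path (S_k(x,l))_k; nearest-neighbour paths started at x.\<close>
definition srw_paths :: "(int ^ 'd \<Rightarrow> nat \<Rightarrow> nat \<Rightarrow> int ^ 'd) \<Rightarrow> bool" where
  "srw_paths S \<longleftrightarrow> (\<forall>x l. 1 \<le> l \<longrightarrow>
      S x l 0 = x \<and> (\<forall>k. norm1 (S x l (Suc k) - S x l k) = 1))"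

text \<open>tau(x,y) = inf{k >= 0 : S_k(x,l) = y for some 1 <= l <= omega(x)}, infinity if empty.\<close>
definition tau :: "(int ^ 'd \<Rightarrow> nat) \<Rightarrow> (int ^ 'd \<Rightarrow> nat \<Rightarrow> nat \<Rightarrow> int ^ 'd)
    \<Rightarrow> int ^ 'd \<Rightarrow> int ^ 'd \<Rightarrow> ereal" where
  "tau \<omega> S x y = Inf ((\<lambda>k. ereal (real k)) ` {k. \<exists>l. 1 \<le> l \<and> l \<le> \<omega> x \<and> S x l k = y})"

definition sigma_t :: "real \<Rightarrow> real \<Rightarrow> (int ^ 'd \<Rightarrow> nat) \<Rightarrow> (int ^ 'd \<Rightarrow> nat \<Rightarrow> nat \<Rightarrow> int ^ 'd)
    \<Rightarrow> int ^ 'd \<Rightarrow> int ^ 'd \<Rightarrow> real" where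
  "sigma_t K t \<omega> S x y =
     (if norm_inf (x - y) \<le> t \<and> tau \<omega> S x y > ereal (4 * K * t) then 4 * K * t
      else if norm_inf (x - y) > t then 4 * K * norm_inf (x - y)
      else real_of_ereal (tau \<omega> S x y))"

text \<open>A path x = x_0, ..., x_m = y with m >= 1, as a list of length m+1.\<close>
definition is_path :: "int ^ 'd \<Rightarrow> int ^ 'd \<Rightarrow> (int ^ 'd) list \<Rightarrow> bool" where
  "is_path x y p \<longleftrightarrow> 2 \<le> length p \<and> hd p = x \<and> last p = y"

definition path_cost :: "real \<Rightarrow> real \<Rightarrow> (int ^ 'd \<Rightarrow> nat) \<Rightarrow> (int ^ 'd \<Rightarrow> nat \<Rightarrow> nat \<Rightarrow> int ^ 'd)
    \<Rightarrow> (int ^ 'd) list \<Rightarrow> real" where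
  "path_cost K t \<omega> S p = sum_list (map (\<lambda>(a, b). sigma_t K t \<omega> S a b) (zip p (tl p)))"

definition T_t :: "real \<Rightarrow> real \<Rightarrow> (int ^ 'd \<Rightarrow> nat) \<Rightarrow> (int ^ 'd \<Rightarrow> nat \<Rightarrow> nat \<Rightarrow> int ^ 'd)
    \<Rightarrow> int ^ 'd \<Rightarrow> int ^ 'd \<Rightarrow> real" where
  "T_t K t \<omega> S x y = Inf {path_cost K t \<omega> S p | p. is_path x y p}"

definition optimal_path :: "real \<Rightarrow> real \<Rightarrow> (int ^ 'd \<Rightarrow> nat) \<Rightarrow> (int ^ 'd \<Rightarrow> nat \<Rightarrow> nat \<Rightarrow> int ^ 'd)
    \<Rightarrow> int ^ 'd \<Rightarrow> int ^ 'd \<Rightarrow> (int ^ 'd) list \<Rightarrow> bool" where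
  "optimal_path K t \<omega> S x y p \<longleftrightarrow> is_path x y p \<and> path_cost K t \<omega> S p = T_t K t \<omega> S x y"

definition in_box :: "real \<Rightarrow> int ^ 'd \<Rightarrow> int ^ 'd \<Rightarrow> bool" where
  "in_box t c z \<longleftrightarrow> (\<forall>i. - t / 2 < real_of_int (z $ i - c $ i) \<and> real_of_int (z $ i - c $ i) \<le> t / 2)"

definition is_tiling :: "real \<Rightarrow> (nat \<Rightarrow> int ^ 'd) \<Rightarrow> bool" where
  "is_tiling t c \<longleftrightarrow> (\<forall>z. \<exists>!q. 1 \<le> q \<and> in_box t (c q) z)"

end

theory Submission
  imports Defs
begin

lemma ninf_ex: "\<exists>i. norm_inf (v::int^'d) = real_of_int \<bar>v $ i\<bar>"
proof -
  have "Max (range (\<lambda>i. \<bar>v $ i\<bar>)) \<in> range (\<lambda>i. \<bar>v $ i\<bar>)"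
    by (rule Max_in) auto
  then obtain i where "Max (range (\<lambda>i. \<bar>v $ i\<bar>)) = \<bar>v $ i\<bar>" by (metis (no_types, lifting) rangeE)
  then show ?thesis unfolding norm_inf_def by (intro exI[of _ i]) simp
qed

lemma ninf_comp: "real_of_int \<bar>(v::int^'d) $ i\<bar> \<le> norm_inf v"
proof -
  have "\<bar>v $ i\<bar> \<le> Max (range (\<lambda>i. \<bar>v $ i\<bar>))" by (rule Max_ge) auto
  then show ?thesis unfolding norm_inf_def by linarith
qed

lemma ninf_nonneg: "0 \<le> norm_inf (v::int^'d)"
  by (metis ninf_ex abs_ge_zero of_int_0_le_iff)

lemma ninf_minus: "norm_inf (- (v::int^'d)) = norm_inf v"
  unfolding norm_inf_def by simp

lemma ninf_sym: "norm_inf ((a::int^'d) - b) = norm_inf (b - a)"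
  by (metis minus_diff_eq ninf_minus)

lemma ninf_zero: "norm_inf (0::int^'d) = 0"
  unfolding norm_inf_def by simp

lemma ninf_tri: "norm_inf ((a::int^'d) - c) \<le> norm_inf (a - b) + norm_inf (b - c)"
proof -
  obtain i where i: "norm_inf (a - c) = real_of_int \<bar>(a - c) $ i\<bar>" using ninf_ex by blast
  have "\<bar>(a - c) $ i\<bar> \<le> \<bar>(a - b) $ i\<bar> + \<bar>(b - c) $ i\<bar>" by simp
  then show ?thesis using i ninf_comp[of "a - b" i] ninf_comp[of "b - c" i] by linarith
qed

lemma ninf_le_norm1: "norm_inf (v::int^'d) \<le> real_of_int (norm1 v)"
proof -
  obtain i where i: "norm_inf v = real_of_int \<bar>v $ i\<bar>" using ninf_ex by blast
  have "\<bar>v $ i\<bar> \<le> norm1 v" unfolding norm1_def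
    by (rule member_le_sum) auto
  then show ?thesis using i by simp
qed

lemma norm1_tri: "norm1 ((a::int^'d) + b) \<le> norm1 a + norm1 b"
  unfolding norm1_def by (simp add: sum.distrib[symmetric] sum_mono abs_triangle_ineq)

lemma walk_bound:
  assumes "srw_paths S" "1 \<le> l"
  shows "norm1 (S x l k - x) \<le> int k"
proof (induction k)
  case 0 then show ?case using assms unfolding srw_paths_def norm1_def by simp
next
  case (Suc k)
  have "S x l (Suc k) - x = (S x l (Suc k) - S x l k) + (S x l k - x)" by simp
  then have "norm1 (S x l (Suc k) - x) \<le> norm1 (S x l (Suc k) - S x l k) + norm1 (S x l k - x)"
    by (metis norm1_tri)
  moreover have "norm1 (S x l (Suc k) - S x l k) = 1" using assms unfolding srw_paths_def by blast
  ultimately show ?case using Suc by simp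
qed

lemma tau_ge:
  assumes "srw_paths S"
  shows "ereal (norm_inf (a - b)) \<le> tau \<omega> S a b"
  unfolding tau_def
proof (rule Inf_greatest)
  fix z assume "z \<in> (\<lambda>k. ereal (real k)) ` {k. \<exists>l. 1 \<le> l \<and> l \<le> \<omega> a \<and> S a l k = b}"
  then obtain k l where z: "z = ereal (real k)" "1 \<le> l" "S a l k = b" by auto
  have "norm1 (b - a) \<le> int k" using walk_bound[OF assms z(2), of a k] z(3) by simp
  then have "norm_inf (b - a) \<le> real k" using ninf_le_norm1[of "b - a"] by linarith
  then show "ereal (norm_inf (a - b)) \<le> z" using z(1) ninf_sym[of a b] by simp
qed

lemma tau_nonneg: "0 \<le> tau \<omega> S a b"
  unfolding tau_def by (rule Inf_greatest) auto

definition var :: "('a \<Rightarrow> 'a \<Rightarrow> real) \<Rightarrow> 'a list \<Rightarrow> real" where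
  "var D p = sum_list (map (\<lambda>(a, b). D a b) (zip p (tl p)))"

lemma var_cons2: "var D (v # u # r) = D v u + var D (u # r)"
  unfolding var_def by simp

lemma var_single: "var D [v] = 0"
  unfolding var_def by simp

lemma chunk:
  assumes refl: "\<And>x. D x x = 0" and tri: "\<And>x y z. D x z \<le> D x y + D y z"
    and nn: "\<And>x y. 0 \<le> D x y" and s: "0 < s"
  shows "D a v \<le> w \<Longrightarrow> D a v \<le> s \<Longrightarrow> \<exists>A. finite A \<and> a \<in> A \<and>
     real (card A) \<le> 1 + (w + var D (v # p)) / s \<and> (\<forall>z\<in>set (v # p). \<exists>b\<in>A. D b z \<le> s)"
proof (induction p arbitrary: v a w)
  case Nil
  have "0 \<le> w" using Nil(1) nn[of a v] by linarith
  then have "1 \<le> 1 + (w + var D [v]) / s" using s by (simp add: var_single)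
  then show ?case using Nil by (intro exI[of _ "{a}"]) auto
next
  case (Cons u r)
  show ?case
  proof (cases "D a u \<le> s")
    case True
    have "D a u \<le> w + D v u" using tri[of a u v] tri[of a v u] Cons(2) by linarith
    from Cons.IH[OF this True] obtain A where A: "finite A" "a \<in> A"
      "real (card A) \<le> 1 + (w + D v u + var D (u # r)) / s"
      "\<forall>z\<in>set (u # r). \<exists>b\<in>A. D b z \<le> s" by blast
    show ?thesis using A Cons(3) by (intro exI[of _ A]) (auto simp: var_cons2 add.assoc)
  next
    case False
    have "D u u \<le> 0" "D u u \<le> s" using refl[of u] s by auto
    from Cons.IH[OF this] obtain A where A: "finite A" "u \<in> A"
      "real (card A) \<le> 1 + (0 + var D (u # r)) / s"
      "\<forall>z\<in>set (u # r). \<exists>b\<in>A. D b z \<le> s" by blast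
    have "s < w + D v u" using False tri[of a u v] Cons(2) by linarith
    then have "1 < (w + D v u) / s" using s by simp
    moreover have "real (card (insert a A)) \<le> real (card A) + 1"
      using A(1) by (simp add: card_insert_if)
    ultimately have "real (card (insert a A)) \<le> 1 + (w + var D (v # u # r)) / s"
      using A(3) s by (simp add: var_cons2 add_divide_distrib)
    then show ?thesis using A Cons(3) by (intro exI[of _ "insert a A"]) auto
  qed
qed

definition Gset :: "(int ^ 'd) set" where
  "Gset = {v. \<forall>i. -3 \<le> v $ i \<and> v $ i \<le> 3}"

lemma Gset_finite: "finite (Gset :: (int ^ 'd) set)"
proof -
  have "Gset \<subseteq> (\<lambda>f. vec_lambda f) ` (PiE (UNIV :: 'd set) (\<lambda>_. {-3..3::int}))"
  proof
    fix v :: "int ^ 'd" assume "v \<in> Gset"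
    then have "vec_nth v \<in> PiE UNIV (\<lambda>_. {-3..3})" unfolding Gset_def by auto
    then show "v \<in> (\<lambda>f. vec_lambda f) ` (PiE UNIV (\<lambda>_. {-3..3}))"
      by (metis image_eqI vec_nth_inverse)
  qed
  moreover have "finite (PiE (UNIV :: 'd set) (\<lambda>_. {-3..3::int}))"
    by (rule finite_PiE) auto
  ultimately show ?thesis using finite_subset by blast
qed

lemma Gset_card: "1 \<le> card (Gset :: (int ^ 'd) set)"
proof -
  have "0 \<in> (Gset :: (int ^ 'd) set)" unfolding Gset_def by simp
  then show ?thesis using Gset_finite by (metis One_nat_def Suc_leI card_gt_0_iff empty_iff)
qed

lemma floor_eq_close: "\<lfloor>x::real\<rfloor> = \<lfloor>y\<rfloor> \<Longrightarrow> \<bar>x - y\<bar> < 1"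
  by (smt (verit) of_int_floor_le real_of_int_floor_add_one_gt)

lemma close_aux:
  fixes X Y s :: real
  assumes s: "0 < s" and e: "\<lfloor>X / s\<rfloor> = \<lfloor>Y / s\<rfloor>"
  shows "\<bar>X - Y\<bar> < s"
proof -
  have "\<bar>X / s - Y / s\<bar> < 1" using floor_eq_close[OF e] .
  moreover have "X / s - Y / s = (X - Y) / s" by (simp add: diff_divide_distrib)
  ultimately have "\<bar>(X - Y) / s\<bar> < 1" by simp
  then have "\<bar>X - Y\<bar> / s < 1" using s by (simp add: abs_divide)
  then show ?thesis using s by (simp add: pos_divide_less_eq)
qed

lemma box_count:
  fixes c :: "nat \<Rightarrow> int ^ 'd" and b :: "int ^ 'd"
  assumes til: "is_tiling t c" and t: "0 < t"
  defines "H \<equiv> {q. 1 \<le> q \<and> (\<exists>z. norm_inf (b - z) \<le> t \<and> in_box t (c q) z)}"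
  shows "finite H \<and> card H \<le> card (Gset :: (int ^ 'd) set)"
proof -
  define f where "f q = (\<chi> i. \<lfloor>real_of_int (c q $ i - b $ i) / (t / 2)\<rfloor>)" for q
  have img: "f ` H \<subseteq> Gset"
  proof
    fix g assume "g \<in> f ` H"
    then obtain q z where q: "g = f q" "norm_inf (b - z) \<le> t" "in_box t (c q) z"
      unfolding H_def by blast
    have "-3 \<le> g $ i \<and> g $ i \<le> 3" for i
    proof -
      have "real_of_int \<bar>(b - z) $ i\<bar> \<le> t" using ninf_comp[of "b - z" i] q(2) by linarith
      moreover have "- t / 2 < real_of_int (z $ i - c q $ i)" "real_of_int (z $ i - c q $ i) \<le> t / 2"
        using q(3) unfolding in_box_def by auto
      ultimately have h: "- 3 * (t / 2) \<le> real_of_int (c q $ i - b $ i)"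
          "real_of_int (c q $ i - b $ i) \<le> 3 * (t / 2)" by auto
      have "- 3 \<le> real_of_int (c q $ i - b $ i) / (t / 2)"
        using h(1) t by (simp add: field_simps)
      moreover have "real_of_int (c q $ i - b $ i) / (t / 2) \<le> 3"
        using h(2) t by (simp add: field_simps)
      ultimately show ?thesis using q(1) unfolding f_def by (simp add: le_floor_iff floor_le_iff)
    qed
    then show "g \<in> Gset" unfolding Gset_def by auto
  qed
  have inj: "inj_on f H"
  proof
    fix q q' assume qH: "q \<in> H" "q' \<in> H" and eq: "f q = f q'"
    have "in_box t (c q) (c q')" unfolding in_box_def
    proof
      fix i
      have "\<lfloor>real_of_int (c q $ i - b $ i) / (t / 2)\<rfloor> = \<lfloor>real_of_int (c q' $ i - b $ i) / (t / 2)\<rfloor>"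
        using arg_cong[OF eq, of "\<lambda>v. v $ i"] unfolding f_def by simp
      then have "\<bar>real_of_int (c q $ i - b $ i) - real_of_int (c q' $ i - b $ i)\<bar> < t / 2"
        by (rule close_aux[rotated]) (use t in simp)
      then have "\<bar>real_of_int (c q' $ i - c q $ i)\<bar> < t / 2" by (simp add: abs_minus_commute)
      then show "- t / 2 < real_of_int (c q' $ i - c q $ i) \<and> real_of_int (c q' $ i - c q $ i) \<le> t / 2"
        by linarith
    qed
    moreover have "in_box t (c q') (c q')" unfolding in_box_def using t by auto
    moreover have "1 \<le> q" "1 \<le> q'" using qH unfolding H_def by auto
    ultimately show "q = q'" using til unfolding is_tiling_def by blast
  qed
  have "finite H" using inj img Gset_finite by (metis finite_imageD finite_subset)
  moreover have "card H \<le> card (Gset :: (int ^ 'd) set)"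
    by (rule card_inj_on_le[OF inj img Gset_finite])
  ultimately show ?thesis by blast
qed

lemma sigma_ge:
  assumes S: "srw_paths S" and K: "1 \<le> K" and t: "0 < t"
  shows "norm_inf (a - b) \<le> sigma_t K t \<omega> S a b"
proof -
  have tg: "ereal (norm_inf (a - b)) \<le> tau \<omega> S a b" by (rule tau_ge[OF S])
  show ?thesis
  proof (cases "norm_inf (a - b) \<le> t \<and> tau \<omega> S a b > ereal (4 * K * t)")
    case True
    then have "norm_inf (a - b) \<le> 4 * K * t" using K t by (smt (verit) mult_le_cancel_right1 mult_right_mono)
    then show ?thesis using True unfolding sigma_t_def by simp
  next
    case F1: False
    show ?thesis
    proof (cases "norm_inf (a - b) > t")
      case True
      have "norm_inf (a - b) \<le> 4 * K * norm_inf (a - b)" using K ninf_nonneg[of "a - b"]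
        by (smt (verit) mult_le_cancel_right1 mult_right_mono)
      then show ?thesis using True F1 unfolding sigma_t_def by simp
    next
      case False
      then have le: "tau \<omega> S a b \<le> ereal (4 * K * t)" using F1 by auto
      have "norm_inf (a - b) \<le> real_of_ereal (tau \<omega> S a b)"
      proof (cases "tau \<omega> S a b" rule: ereal_cases)
        case (real r) then show ?thesis using tg by simp
      next
        case PInf then show ?thesis using le by simp
      next
        case MInf then show ?thesis using tg by simp
      qed
      then show ?thesis using False F1 unfolding sigma_t_def by simp
    qed
  qed
qed

lemma sigma_nonneg:
  assumes K: "1 \<le> K" and t: "0 < t"
  shows "0 \<le> sigma_t K t \<omega> S a b"
  unfolding sigma_t_def using K t ninf_nonneg[of "a - b"] tau_nonneg[of \<omega> S a b]
  by (auto simp: real_of_ereal_pos)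

lemma sigma_direct:
  assumes K: "1 \<le> K" and t: "0 < t"
  shows "sigma_t K t \<omega> S a b \<le> 4 * K * max t (norm_inf (a - b))"
proof -
  have "real_of_ereal (tau \<omega> S a b) \<le> 4 * K * t" if "tau \<omega> S a b \<le> ereal (4 * K * t)"
    using that tau_nonneg[of \<omega> S a b] K t
    by (metis ereal_less_eq(3) ereal_real less_eq_ereal_def mult_nonneg_nonneg real_of_ereal_pos
        zero_le_numeral order.trans less_imp_le zero_le_one) 
  moreover have "4 * K * t \<le> 4 * K * max t (norm_inf (a - b))"
    "4 * K * norm_inf (a - b) \<le> 4 * K * max t (norm_inf (a - b))" using K by auto
  ultimately show ?thesis unfolding sigma_t_def by (auto simp: not_less)
qed

lemma sum_ind: "(\<Sum>q = 1..Q. if P q then 1 else 0) = real (card {q \<in> {1..(Q::nat)}. P q})"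
  by (simp add: sum.If_cases Int_def)

lemma max_div: "0 < t \<Longrightarrow> max t n / t = max 1 (n / (t::real))"
  by (simp add: max_def divide_le_cancel)

theorem lemma4p4:
  fixes C0 \<gamma> K :: real
  assumes "CARD('d) \<ge> 2"
    and "0 < C0" and "0 < \<gamma>"
    and "K > real CARD('d) * (C0 + \<gamma> + 1)"
  shows "\<exists>C::real. C \<ge> 1 \<and>
    (\<forall>(\<omega> :: int ^ 'd \<Rightarrow> nat) (S :: int ^ 'd \<Rightarrow> nat \<Rightarrow> nat \<Rightarrow> int ^ 'd)
       (x :: int ^ 'd) (t :: real) (c :: nat \<Rightarrow> int ^ 'd) (Q :: nat) (\<pi> :: (int ^ 'd) list).
       srw_paths S \<longrightarrow> x \<noteq> 0 \<longrightarrow> 0 < t \<longrightarrow> is_tiling t c \<longrightarrow>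
       optimal_path K t \<omega> S 0 x \<pi> \<longrightarrow>
       (\<Sum>q = 1..Q. if (\<exists>v\<in>set \<pi>. in_box t (c q) v) then 1 else 0)
         \<le> C * K * max 1 (norm_inf x / t))"
proof -
  define N where "N = real (card (Gset :: (int ^ 'd) set))"
  have N1: "1 \<le> N" unfolding N_def using Gset_card by simp
  have K1: "1 \<le> K"
  proof -
    have "real CARD('d) * (C0 + \<gamma> + 1) \<ge> 2 * 1"
      using assms(1-3) by (intro mult_mono) auto
    then show ?thesis using assms(4) by linarith
  qed
  show ?thesis
  proof (intro exI[of _ "5 * N"] conjI allI impI)
    show "1 \<le> 5 * N" using N1 by simp
  next
    fix \<omega> :: "int ^ 'd \<Rightarrow> nat" and S :: "int ^ 'd \<Rightarrow> nat \<Rightarrow> nat \<Rightarrow> int ^ 'd"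
      and x :: "int ^ 'd" and t :: real and c :: "nat \<Rightarrow> int ^ 'd" and Q :: nat
      and \<pi> :: "(int ^ 'd) list"
    assume S: "srw_paths S" and x0: "x \<noteq> 0" and t: "0 < t" and til: "is_tiling t c"
      and opt: "optimal_path K t \<omega> S 0 x \<pi>"
    define D where "D = (\<lambda>a b :: int ^ 'd. norm_inf (a - b))"
    define m where "m = max 1 (norm_inf x / t)"
    have m1: "1 \<le> m" unfolding m_def by simp
    have pth: "is_path 0 x \<pi>" and pc: "path_cost K t \<omega> S \<pi> = T_t K t \<omega> S 0 x"
      using opt unfolding optimal_path_def by auto
    have pi_eq: "\<pi> = 0 # tl \<pi>" using pth unfolding is_path_def
      by (metis hd_Cons_tl list.size(3) not_numeral_le_zero)
    have V: "var D \<pi> \<le> path_cost K t \<omega> S \<pi>"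
      unfolding var_def path_cost_def D_def
      by (rule sum_list_mono) (auto intro: sigma_ge[OF S K1 t])
    have bdd: "bdd_below {path_cost K t \<omega> S p | p. is_path 0 x p}"
      unfolding bdd_below_def path_cost_def
      by (intro exI[of _ 0]) (auto intro!: sum_list_nonneg sigma_nonneg[OF K1 t])
    have "is_path 0 x [0, x]" unfolding is_path_def by simp
    then have "T_t K t \<omega> S 0 x \<le> path_cost K t \<omega> S [0, x]"
      unfolding T_t_def by (intro cInf_lower[OF _ bdd]) auto
    also have "\<dots> = sigma_t K t \<omega> S 0 x" unfolding path_cost_def by simp
    also have "\<dots> \<le> 4 * K * max t (norm_inf x)"
      using sigma_direct[OF K1 t, of \<omega> S 0 x] by (simp add: ninf_minus)
    finally have Vb: "var D \<pi> \<le> 4 * K * max t (norm_inf x)" using V pc by linarith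
    have "D 0 0 \<le> 0" "D 0 0 \<le> t" unfolding D_def using t by (auto simp: ninf_zero)
    from chunk[of D t, OF _ _ _ t this, of "tl \<pi>"]
    obtain A where A: "finite A" "real (card A) \<le> 1 + (0 + var D \<pi>) / t"
      "\<forall>z\<in>set \<pi>. \<exists>b\<in>A. D b z \<le> t"
      unfolding D_def using ninf_tri ninf_nonneg pi_eq
      by (metis (no_types, lifting) ninf_zero right_minus_eq)
    define H where "H b = {q. 1 \<le> q \<and> (\<exists>z. norm_inf (b - z) \<le> t \<and> in_box t (c q) z)}" for b
    have Hb: "finite (H b) \<and> card (H b) \<le> card (Gset :: (int ^ 'd) set)" for b
      unfolding H_def by (rule box_count[OF til t])
    have sub: "{q \<in> {1..Q}. \<exists>v\<in>set \<pi>. in_box t (c q) v} \<subseteq> (\<Union>b\<in>A. H b)"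
      using A(3) unfolding H_def D_def by fastforce
    have "card {q \<in> {1..Q}. \<exists>v\<in>set \<pi>. in_box t (c q) v} \<le> card (\<Union>b\<in>A. H b)"
      by (rule card_mono[OF _ sub]) (use A(1) Hb in auto)
    also have "\<dots> \<le> (\<Sum>b\<in>A. card (H b))" by (rule card_UN_le[OF A(1)])
    also have "\<dots> \<le> (\<Sum>b\<in>A. card (Gset :: (int ^ 'd) set))" by (rule sum_mono) (use Hb in auto)
    finally have c1: "real (card {q \<in> {1..Q}. \<exists>v\<in>set \<pi>. in_box t (c q) v}) \<le> real (card A) * N"
      unfolding N_def by (simp add: of_nat_mult[symmetric] del: of_nat_mult)
    have "var D \<pi> / t \<le> 4 * K * max t (norm_inf x) / t" using Vb t by (simp add: divide_right_mono)
    also have "\<dots> = 4 * K * m" unfolding m_def using max_div[OF t, of "norm_inf x"] by (simp add: times_divide_eq_right[symmetric] del: times_divide_eq_right)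
    finally have "real (card A) \<le> 1 + 4 * K * m" using A(2) by simp
    moreover have "1 \<le> K * m" using K1 m1 mult_mono[of 1 K 1 m] by simp
    ultimately have cA: "real (card A) \<le> 5 * (K * m)" by linarith
    have "real (card A) * N \<le> 5 * (K * m) * N"
      by (rule mult_right_mono[OF cA]) (use N1 in simp)
    with c1 have fin: "real (card {q \<in> {1..Q}. \<exists>v\<in>set \<pi>. in_box t (c q) v}) \<le> 5 * N * K * m"
      by (simp only: mult_ac)
    show "(\<Sum>q = 1..Q. if (\<exists>v\<in>set \<pi>. in_box t (c q) v) then 1 else 0)
         \<le> 5 * N * K * max 1 (norm_inf x / t)"
      using fin unfolding sum_ind m_def .
  qed
qed

end
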